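(* Let $k\geq2$ and let $a_1\leq a_2\leq\dots\leq a_k$ be positive integers with $\gcd(a_1,\dots,a_k)=1$, let $S=\langle a_1,\dots,a_k\rangle$, and let $\alpha$ be an integer with $0\leq\alpha\leq a_1a_2$. Then $$n(S,\alpha)\leq\sum_{\lambda=0}^{\lfloor\alpha/a_1\rfloor}\left(\left\lfloor\frac{\alpha-\lambda a_1}{a_2}\right\rfloor+1\right)^{k-1}.$$
   Context: $S=\langle a_1,\dots,a_k\rangle=\{\lambda_1a_1+\dots+\lambda_ka_k:\lambda_i\in\mathbb{Z}_{\geq0}\}$; $n(S,\alpha)$ is the number of elements $s\in S$ with $s\leq\alpha$. *)

theory Defs
  imports Main
begin

definition gen_semigroup :: "nat \<Rightarrow> (nat \<Rightarrow> nat) \<Rightarrow> nat set" where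
  "gen_semigroup k a = {s. \<exists>l :: nat \<Rightarrow> nat. s = (\<Sum>i=1..k. l i * a i)}"

definition count_le :: "nat set \<Rightarrow> int \<Rightarrow> nat" where
  "count_le S \<alpha> = card {s \<in> S. int s \<le> \<alpha>}"

end

theory Submission
  imports Defs "HOL-Library.FuncSet"
begin

theorem mainTheorem9:
  fixes k :: nat and a :: "nat \<Rightarrow> nat" and \<alpha> :: int
  assumes "k \<ge> 2"
    and "\<And>i. i \<in> {1..k} \<Longrightarrow> a i > 0"
    and "\<And>i j. i \<in> {1..k} \<Longrightarrow> j \<in> {1..k} \<Longrightarrow> i \<le> j \<Longrightarrow> a i \<le> a j"
    and "Gcd (a ` {1..k}) = 1"
    and "0 \<le> \<alpha>" and "\<alpha> \<le> int (a 1 * a 2)"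
  shows "int (count_le (gen_semigroup k a) \<alpha>)
    \<le> (\<Sum>t=0..\<alpha> div int (a 1). ((\<alpha> - t * int (a 1)) div int (a 2) + 1) ^ (k - 1))"
proof -
  define A where "A = nat \<alpha>"
  have aA: "\<alpha> = int A" using assms(5) A_def by simp
  have a1: "a 1 > 0" using assms(1,2) by auto
  have a2: "a 2 > 0" using assms(1,2) by auto
  have ai: "\<And>i. i \<in> {2..k} \<Longrightarrow> a 2 \<le> a i" using assms(1,3) by auto
  define B where "B t = (A - t * a 1) div a 2" for t
  define D :: "(nat \<times> (nat \<Rightarrow> nat)) set" where "D = Sigma {0..A div a 1} (\<lambda>t. PiE {2..k} (\<lambda>_. {0..B t}))"
  define f where "f p = fst p * a 1 + (\<Sum>i=2..k. snd p i * a i)" for p :: "nat \<times> (nat \<Rightarrow> nat)"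
  have split: "(\<Sum>i=1..k. g i) = g 1 + (\<Sum>i=2..k. g i)" for g :: "nat \<Rightarrow> nat"
  proof -
    have "{1..k} = insert 1 {2..k}" using assms(1) by auto
    then show ?thesis by simp
  qed
  have sub: "{s \<in> gen_semigroup k a. int s \<le> \<alpha>} \<subseteq> f ` D"
  proof
    fix s assume "s \<in> {s \<in> gen_semigroup k a. int s \<le> \<alpha>}"
    then obtain l where s: "s = (\<Sum>i=1..k. l i * a i)" and sA: "s \<le> A"
      unfolding gen_semigroup_def aA by auto
    have s2: "s = l 1 * a 1 + (\<Sum>i=2..k. l i * a i)" using s split by simp
    have t: "l 1 \<le> A div a 1"
      using s2 sA a1 by (simp add: less_eq_div_iff_mult_less_eq)
    have m: "restrict l {2..k} \<in> PiE {2..k} (\<lambda>_. {0..B (l 1)})"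
    proof
      fix i assume i: "i \<in> {2..k}"
      have "l i * a 2 \<le> l i * a i" using ai[OF i] by simp
      also have "\<dots> \<le> (\<Sum>j=2..k. l j * a j)"
        using i by (intro member_le_sum) auto
      also have "\<dots> = s - l 1 * a 1" using s2 by simp
      also have "\<dots> \<le> A - l 1 * a 1" using sA by simp
      finally have "l i * a 2 \<le> A - l 1 * a 1" .
      hence "l i \<le> B (l 1)" unfolding B_def using a2
        by (simp add: less_eq_div_iff_mult_less_eq)
      thus "restrict l {2..k} i \<in> {0..B (l 1)}" using i by (simp add: restrict_apply)
    qed auto
    have "f (l 1, restrict l {2..k}) = s" unfolding f_def using s2 by simp
    moreover have "(l 1, restrict l {2..k}) \<in> D" unfolding D_def using t m by auto
    ultimately show "s \<in> f ` D" by force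
  qed
  have finD: "finite D" unfolding D_def by (auto intro!: finite_PiE)
  have "count_le (gen_semigroup k a) \<alpha> \<le> card D"
    unfolding count_le_def using card_mono[OF _ sub] card_image_le[OF finD, of f] finD
    by (meson finite_imageI le_trans)
  also have "card D = (\<Sum>t=0..A div a 1. (B t + 1) ^ (k - 1))"
    unfolding D_def by (simp add: card_SigmaI card_PiE finite_PiE)
  finally have le: "int (count_le (gen_semigroup k a) \<alpha>) \<le> int (\<Sum>t=0..A div a 1. (B t + 1) ^ (k - 1))"
    by linarith
  have rng: "{0..\<alpha> div int (a 1)} = int ` {0..A div a 1}"
    using aA by (simp add: zdiv_int image_int_atLeastAtMost)
  have "int (\<Sum>t=0..A div a 1. (B t + 1) ^ (k - 1))
      = (\<Sum>t\<in>{0..A div a 1}. ((\<alpha> - int t * int (a 1)) div int (a 2) + 1) ^ (k - 1))"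
    unfolding of_nat_sum
  proof (rule sum.cong)
    fix t assume "t \<in> {0..A div a 1}"
    hence "t * a 1 \<le> A" using a1
      by (simp add: less_eq_div_iff_mult_less_eq)
    hence "(\<alpha> - int t * int (a 1)) div int (a 2) = int (B t)"
      unfolding B_def aA by (simp add: zdiv_int of_nat_diff)
    thus "int ((B t + 1) ^ (k - 1)) = ((\<alpha> - int t * int (a 1)) div int (a 2) + 1) ^ (k - 1)"
      by (simp add: add.commute)
  qed simp
  also have "\<dots> = (\<Sum>t=0..\<alpha> div int (a 1). ((\<alpha> - t * int (a 1)) div int (a 2) + 1) ^ (k - 1))"
    unfolding rng by (simp add: sum.reindex)
  finally show ?thesis using le by simp
qed

end
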